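(* For every type $\varphi$ of $(\lambda\beta\eta\pi* )'$ the following hold. (CR0) If $\varphi\in\mathit{Iso}(\top)$, then $*^\varphi$ is reducible. (CR1) If $t^\varphi$ is reducible, then $t^\varphi$ is SN. (CR2) If $t^\varphi$ is reducible and $t^\varphi\to t'$, then $t'$ is reducible. (CR3) If $t^\varphi$ is neutral and every $t'$ with $t^\varphi\to t'$ is reducible, then $t^\varphi$ is reducible.
   Context: Types are built from a distinguished type constant $\top$ and type variables by means of $\varphi\times\psi$ and $\varphi\to\psi$; an atomic type is $\top$ or a type variable. Terms are simply typed (each variable carries its type): the term constant $*^\top$, variables $x^\varphi$, abstractions $(\lambda x^\varphi.t^\psi)^{\varphi\to\psi}$, applications $(u^{\varphi\to\psi}v^\varphi)^\psi$, pairs $\langle u^\varphi,v^\psi\rangle^{\varphi\times\psi}$, projections $(\pi_1 t^{\varphi\times\psi})^\varphi$, $(\pi_2 t^{\varphi\times\psi})^\psi$. Terms are identified up to renaming of bound variables, written $\equiv$; $\mathrm{FV}(t)$ is the set of free variables. The set $\mathit{Iso}(\top)$ is the least set of types containing $\top$, containing $\varphi\to\tau$ whenever $\tau\in\mathit{Iso}(\top)$ ($\varphi$ arbitrary), and containing $\tau_1\times\tau_2$ whenever $\tau_1,\tau_2\in\mathit{Iso}(\top)$. For $\tau\in\mathit{Iso}(\top)$ the canonical term $*^\tau$ is: $*^\top$ the constant; $*^{\varphi\to\tau}:=\lambda x^\varphi.*^\tau$; $*^{\tau_1\times\tau_2}:=\langle *^{\tau_1},*^{\tau_2}\rangle$ (writing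 $*^\varphi$ presupposes $\varphi\in\mathit{Iso}(\top)$). The one-step rewrite relation $\to$ of $(\lambda\beta\eta\pi* )'$ is the closure under arbitrary term contexts of: $(\beta)$ $(\lambda x.u)v\to u[x:=v]$; $(\pi_1)$ $\pi_1\langle u,v\rangle\to u$; $(\pi_2)$ $\pi_2\langle u,v\rangle\to v$; $(\eta)$ $\lambda x.tx\to t$ if $x\notin\mathrm{FV}(t)$; $(SP)$ $\langle\pi_1u,\pi_2u\rangle\to u$; (gentop) $u^\tau\to *^\tau$ if $\tau\in\mathit{Iso}(\top)$ and $u\not\equiv *^\tau$; $(\eta_{top})$ $\lambda x^\tau.t\,*^\tau\to t$ if $\tau\in\mathit{Iso}(\top)$, $x\notin\mathrm{FV}(t)$; $(SP_{top}1)$ $\langle\pi_1u,*^\tau\rangle\to u$ for $u$ of type $\varphi\times\tau$, $\tau\in\mathit{Iso}(\top)$; $(SP_{top}2)$ $\langle *^\tau,\pi_2u\rangle\to u$ for $u$ of type $\tau\times\psi$, $\tau\in\mathit{Iso}(\top)$. A term is SN if there is no infinite $\to$-sequence starting from it. Reducibility is defined by induction on types: a term of atomic type is reducible iff it is SN; a term $t$ of type $\varphi\times\psi$ is reducible iff $\pi_1t$ and $\pi_2t$ are reducible; a term $t$ of type $\varphi\to\psi$ is reducible iff $tu$ is reducible for every reducible term $u$ of type $\varphi$. A term is neutral if it is not of the form $\langle u,v\rangle$ or $\lambda x.v$. *)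

theory Defs
  imports Main
begin

datatype ty = TTop | TVar nat | Prod ty ty | Fun ty ty

text \<open>Terms up to alpha-equivalence: bound variables are de Bruijn indices
  (the binder carries the type), free variables are named and carry their type.\<close>
datatype tm =
    Star
  | Free nat ty
  | Bound nat
  | Lam ty tm
  | App tm tm
  | Pair tm tm
  | Pi1 tm
  | Pi2 tm

text \<open>Typing; the list gives the types of the loose de Bruijn indices.
  A term of type phi is a term t with typing [] t phi.\<close>
inductive typing :: "ty list \<Rightarrow> tm \<Rightarrow> ty \<Rightarrow> bool" where
  t_star: "typing G Star TTop"
| t_free: "typing G (Free x A) A"
| t_bound: "i < length G \<Longrightarrow> typing G (Bound i) (G ! i)"
| t_lam: "typing (A # G) t B \<Longrightarrow> typing G (Lam A t) (Fun A B)"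
| t_app: "typing G u (Fun A B) \<Longrightarrow> typing G v A \<Longrightarrow> typing G (App u v) B"
| t_pair: "typing G u A \<Longrightarrow> typing G v B \<Longrightarrow> typing G (Pair u v) (Prod A B)"
| t_pi1: "typing G t (Prod A B) \<Longrightarrow> typing G (Pi1 t) A"
| t_pi2: "typing G t (Prod A B) \<Longrightarrow> typing G (Pi2 t) B"

inductive iso :: "ty \<Rightarrow> bool" where
  iso_top: "iso TTop"
| iso_fun: "iso B \<Longrightarrow> iso (Fun A B)"
| iso_prod: "iso A \<Longrightarrow> iso B \<Longrightarrow> iso (Prod A B)"

text \<open>Canonical term *^tau (only meaningful for tau in Iso(top)).\<close>
fun star_tm :: "ty \<Rightarrow> tm" where
  "star_tm TTop = Star"
| "star_tm (Fun A B) = Lam A (star_tm B)"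
| "star_tm (Prod A B) = Pair (star_tm A) (star_tm B)"
| "star_tm (TVar a) = Star"

fun lift :: "nat \<Rightarrow> tm \<Rightarrow> tm" where
  "lift k Star = Star"
| "lift k (Free x A) = Free x A"
| "lift k (Bound i) = (if i < k then Bound i else Bound (Suc i))"
| "lift k (Lam A t) = Lam A (lift (Suc k) t)"
| "lift k (App u v) = App (lift k u) (lift k v)"
| "lift k (Pair u v) = Pair (lift k u) (lift k v)"
| "lift k (Pi1 t) = Pi1 (lift k t)"
| "lift k (Pi2 t) = Pi2 (lift k t)"

fun subst :: "nat \<Rightarrow> tm \<Rightarrow> tm \<Rightarrow> tm" where
  "subst k Star s = Star"
| "subst k (Free x A) s = Free x A"
| "subst k (Bound i) s = (if i < k then Bound i else if i = k then s else Bound (i - 1))"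
| "subst k (Lam A t) s = Lam A (subst (Suc k) t (lift 0 s))"
| "subst k (App u v) s = App (subst k u s) (subst k v s)"
| "subst k (Pair u v) s = Pair (subst k u s) (subst k v s)"
| "subst k (Pi1 t) s = Pi1 (subst k t s)"
| "subst k (Pi2 t) s = Pi2 (subst k t s)"

text \<open>The list G records the types of the binders above the redex (needed to know
  the type of a subterm for the typed rules).  The condition x not free in t of
  the eta rules is expressed by writing the function part as  lift 0 t.\<close>
inductive red :: "ty list \<Rightarrow> tm \<Rightarrow> tm \<Rightarrow> bool" where
  beta: "red G (App (Lam A u) v) (subst 0 u v)"
| pi1: "red G (Pi1 (Pair u v)) u"
| pi2: "red G (Pi2 (Pair u v)) v"
| eta: "red G (Lam A (App (lift 0 t) (Bound 0))) t"
| sp: "red G (Pair (Pi1 u) (Pi2 u)) u"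
| gentop: "typing G u T \<Longrightarrow> iso T \<Longrightarrow> u \<noteq> star_tm T \<Longrightarrow> red G u (star_tm T)"
| eta_top: "iso T \<Longrightarrow> red G (Lam T (App (lift 0 t) (star_tm T))) t"
| sp_top1: "typing G u (Prod A T) \<Longrightarrow> iso T \<Longrightarrow> red G (Pair (Pi1 u) (star_tm T)) u"
| sp_top2: "typing G u (Prod T B) \<Longrightarrow> iso T \<Longrightarrow> red G (Pair (star_tm T) (Pi2 u)) u"
| c_lam: "red (A # G) t t' \<Longrightarrow> red G (Lam A t) (Lam A t')"
| c_appl: "red G u u' \<Longrightarrow> red G (App u v) (App u' v)"
| c_appr: "red G v v' \<Longrightarrow> red G (App u v) (App u v')"
| c_pairl: "red G u u' \<Longrightarrow> red G (Pair u v) (Pair u' v)"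
| c_pairr: "red G v v' \<Longrightarrow> red G (Pair u v) (Pair u v')"
| c_pi1: "red G t t' \<Longrightarrow> red G (Pi1 t) (Pi1 t')"
| c_pi2: "red G t t' \<Longrightarrow> red G (Pi2 t) (Pi2 t')"

definition SN :: "tm \<Rightarrow> bool" where
  "SN t \<longleftrightarrow> \<not> (\<exists>f. f 0 = t \<and> (\<forall>i. red [] (f i) (f (Suc i))))"

fun reducible :: "ty \<Rightarrow> tm \<Rightarrow> bool" where
  "reducible TTop t = SN t"
| "reducible (TVar a) t = SN t"
| "reducible (Prod A B) t = (reducible A (Pi1 t) \<and> reducible B (Pi2 t))"
| "reducible (Fun A B) t = (\<forall>u. typing [] u A \<longrightarrow> reducible A u \<longrightarrow> reducible B (App t u))"

definition neutral :: "tm \<Rightarrow> bool" where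
  "neutral t \<longleftrightarrow> (\<forall>u v. t \<noteq> Pair u v) \<and> (\<forall>A v. t \<noteq> Lam A v)"

end

theory Submission
  imports Defs
begin


inductive_cases typ_StarE: "typing G Star T"
inductive_cases typ_FreeE: "typing G (Free x A) T"
inductive_cases typ_BoundE: "typing G (Bound i) T"
inductive_cases typ_LamE: "typing G (Lam A t) T"
inductive_cases typ_AppE: "typing G (App u v) T"
inductive_cases typ_PairE: "typing G (Pair u v) T"
inductive_cases typ_Pi1E: "typing G (Pi1 t) T"
inductive_cases typ_Pi2E: "typing G (Pi2 t) T"

lemma typing_unique: "typing G t T \<Longrightarrow> typing G t T' \<Longrightarrow> T = T'"
proof (induction arbitrary: T' rule: typing.induct)
  case (t_star G)
  then show ?case by (auto elim: typ_StarE)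
next
  case (t_free G x A)
  then show ?case by (auto elim: typ_FreeE)
next
  case (t_bound i G)
  then show ?case by (auto elim: typ_BoundE)
next
  case (t_lam A G t B)
  from t_lam.prems obtain B' where "typing (A # G) t B'" "T' = Fun A B'" by (auto elim: typ_LamE)
  then show ?case using t_lam.IH by simp
next
  case (t_app G u A B v)
  from t_app.prems obtain A' where "typing G u (Fun A' T')" by (auto elim: typ_AppE)
  then show ?case using t_app.IH(1) by fastforce
next
  case (t_pair G u A v B)
  from t_pair.prems obtain A' B' where "typing G u A'" "typing G v B'" "T' = Prod A' B'" by (auto elim: typ_PairE)
  then show ?case using t_pair.IH by simp
next
  case (t_pi1 G t A B)
  from t_pi1.prems obtain B' where "typing G t (Prod T' B')" by (auto elim: typ_Pi1E)
  then show ?case using t_pi1.IH by fastforce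
next
  case (t_pi2 G t A B)
  from t_pi2.prems obtain A' where "typing G t (Prod A' T')" by (auto elim: typ_Pi2E)
  then show ?case using t_pi2.IH by fastforce
qed

lemma typing_star: "iso T \<Longrightarrow> typing G (star_tm T) T"
  by (induction arbitrary: G rule: iso.induct) (auto intro: typing.intros)

lemma star_not: "star_tm T \<noteq> App u v" "star_tm T \<noteq> Pi1 t" "star_tm T \<noteq> Pi2 t"
  by (cases T; simp)+

lemma lift_star[simp]: "lift k (star_tm T) = star_tm T"
  by (induction T arbitrary: k) auto
lemma subst_star[simp]: "subst k (star_tm T) s = star_tm T"
  by (induction T arbitrary: k s) auto

lemma star_normal: "iso T \<Longrightarrow> \<not> red G (star_tm T) r"
proof (induction arbitrary: G r rule: iso.induct)
  case iso_top
  show ?case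
  proof
    assume "red G (star_tm TTop) r"
    then show False
      by (cases rule: red.cases) (auto dest: typing_unique[OF t_star] simp: star_not)
  qed
next
  case (iso_fun B A)
  show ?case
  proof
    assume "red G (star_tm (Fun A B)) r"
    then show False using iso_fun
      by (cases rule: red.cases) (auto dest: typing_unique[OF t_lam[OF typing_star[OF iso_fun(1)]]] simp: star_not)
  qed
next
  case (iso_prod A B)
  show ?case
  proof
    assume "red G (star_tm (Prod A B)) r"
    then show False using iso_prod
      by (cases rule: red.cases) (auto dest: typing_unique[OF t_pair[OF typing_star[OF iso_prod(1)] typing_star[OF iso_prod(2)]]] simp: star_not)
  qed
qed

lemma t_bound': "i < length G \<Longrightarrow> T = G ! i \<Longrightarrow> typing G (Bound i) T"
  using t_bound by simp

lemma typing_lift: "typing G t T \<Longrightarrow> k \<le> length G \<Longrightarrow> typing (take k G @ B # drop k G) (lift k t) T"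
proof (induction arbitrary: k rule: typing.induct)
  case (t_bound i G)
  show ?case
  proof (cases "i < k")
    case True
    then show ?thesis using t_bound by (auto intro!: t_bound' simp: nth_append)
  next
    case False
    then show ?thesis using t_bound by (auto intro!: t_bound' simp: nth_append)
  qed
next
  case (t_lam A G t B)
  then show ?case using t_lam.IH[of "Suc k"] by (auto intro!: typing.t_lam)
qed (auto intro: typing.intros)

lemma typing_unlift: "typing G' (lift k t) T \<Longrightarrow> G' = take k G @ B # drop k G \<Longrightarrow> k \<le> length G \<Longrightarrow> typing G t T"
proof (induction t arbitrary: G' G k T)
  case (Bound i)
  show ?case
  proof (cases "i < k")
    case True
    then show ?thesis using Bound by (auto elim!: typ_BoundE intro!: t_bound' simp: nth_append)
  next
    case False
    then show ?thesis using Bound by (auto elim!: typ_BoundE intro!: t_bound' simp: nth_append)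
  qed
next
  case (Lam A t)
  then show ?case by (auto elim!: typ_LamE intro!: t_lam) (metis Suc_le_mono length_Cons take_Suc_Cons drop_Suc_Cons append_Cons)
next
  case (App u v)
  from App.prems(1) obtain A where "typing G' (lift k u) (Fun A T)" "typing G' (lift k v) A"
    by (auto elim!: typ_AppE)
  with App show ?case by (blast intro: t_app)
next
  case (Pi1 u)
  from Pi1.prems(1) obtain B2 where "typing G' (lift k u) (Prod T B2)" by (auto elim!: typ_Pi1E)
  with Pi1 show ?case by (blast intro: t_pi1)
next
  case (Pi2 u)
  from Pi2.prems(1) obtain B2 where "typing G' (lift k u) (Prod B2 T)" by (auto elim!: typ_Pi2E)
  with Pi2 show ?case by (blast intro: t_pi2)
next
  case (Pair u v)
  then show ?case by (auto elim!: typ_PairE intro!: t_pair)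
qed (auto elim!: typ_StarE typ_FreeE intro: t_star t_free)

lemma typing_subst: "typing G t T \<Longrightarrow> k < length G \<Longrightarrow> typing (take k G @ drop (Suc k) G) s (G!k)
   \<Longrightarrow> typing (take k G @ drop (Suc k) G) (subst k t s) T"
proof (induction arbitrary: k s rule: typing.induct)
  case (t_bound i G)
  consider "i < k" | "i = k" | "i > k" by arith
  then show ?case
  proof cases
    case 1
    then show ?thesis using t_bound by (auto intro!: t_bound' simp: nth_append)
  next
    case 2
    then show ?thesis using t_bound by simp
  next
    case 3
    then obtain j where j: "i = Suc j" "k \<le> j" by (cases i) auto
    have "(take k G @ drop (Suc k) G) ! j = G ! i"
      using j t_bound by (simp add: nth_append)
    then show ?thesis using j t_bound by (auto intro!: t_bound')
  qed
next
  case (t_lam A G t B)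
  have "typing (A # (take k G @ drop (Suc k) G)) (lift 0 s) (G!k)"
    using typing_lift[OF t_lam.prems(2), of 0 A] by simp
  then show ?case using t_lam.IH[of "Suc k" "lift 0 s"] t_lam.prems by (auto intro!: typing.t_lam)
next
  case (t_app G u A B v)
  show ?case by (simp, rule typing.t_app[OF t_app.IH(1)[OF t_app.prems] t_app.IH(2)[OF t_app.prems]])
next
  case (t_pi1 G t A B)
  show ?case by (simp, rule typing.t_pi1[OF t_pi1.IH[OF t_pi1.prems]])
next
  case (t_pi2 G t A B)
  show ?case by (simp, rule typing.t_pi2[OF t_pi2.IH[OF t_pi2.prems]])
next
  case (t_pair G u A v B)
  then show ?case by (simp add: typing.t_pair)
qed (auto intro: t_star t_free)




lemma sr: "red G t t' \<Longrightarrow> typing G t T \<Longrightarrow> typing G t' T"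
proof (induction arbitrary: T rule: red.induct)
  case (beta G A u v)
  from beta obtain A' where "typing G (Lam A u) (Fun A' T)" "typing G v A'" by (auto elim: typ_AppE)
  then have "typing (A # G) u T" "typing G v A" by (auto elim: typ_LamE)
  then show ?case using typing_subst[of "A # G" u T 0 v] by simp
next
  case (pi1 G u v)
  from pi1 obtain B where "typing G (Pair u v) (Prod T B)" by (auto elim: typ_Pi1E)
  then show ?case by (auto elim: typ_PairE)
next
  case (pi2 G u v)
  from pi2 obtain A where "typing G (Pair u v) (Prod A T)" by (auto elim: typ_Pi2E)
  then show ?case by (auto elim: typ_PairE)
next
  case (eta G A t)
  from eta obtain B where T: "T = Fun A B" and "typing (A # G) (App (lift 0 t) (Bound 0)) B"
    by (auto elim: typ_LamE)
  then obtain C where c1: "typing (A # G) (lift 0 t) (Fun C B)" and c2: "typing (A # G) (Bound 0) C"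
    by (auto elim: typ_AppE)
  from c2 have "C = A" by (auto elim: typ_BoundE)
  with c1 have "typing (A # G) (lift 0 t) (Fun A B)" by simp
  then have "typing G t (Fun A B)" by (rule typing_unlift) simp_all
  then show ?case using T by simp
next
  case (sp G u)
  from sp obtain A B where T: "T = Prod A B" and a: "typing G (Pi1 u) A" and b: "typing G (Pi2 u) B"
    by (auto elim: typ_PairE)
  from a obtain B' where a': "typing G u (Prod A B')" by (auto elim: typ_Pi1E)
  from b obtain A' where b': "typing G u (Prod A' B)" by (auto elim: typ_Pi2E)
  from typing_unique[OF a' b'] have "B' = B" by simp
  with a' T show ?case by simp
next
  case (gentop G u T')
  from typing_unique[OF gentop(1) gentop(4)] have "T = T'" by simp
  then show ?case using typing_star[OF gentop(2)] by simp
next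
  case (eta_top T0 G t)
  from eta_top obtain B where T: "T = Fun T0 B" and "typing (T0 # G) (App (lift 0 t) (star_tm T0)) B"
    by (auto elim: typ_LamE)
  then obtain C where c1: "typing (T0 # G) (lift 0 t) (Fun C B)" and c2: "typing (T0 # G) (star_tm T0) C"
    by (auto elim: typ_AppE)
  from typing_unique[OF typing_star[OF eta_top(1)] c2] have "C = T0" by simp
  with c1 have "typing (T0 # G) (lift 0 t) (Fun T0 B)" by simp
  then have "typing G t (Fun T0 B)" by (rule typing_unlift) simp_all
  then show ?case using T by simp
next
  case (sp_top1 G u A T0)
  from sp_top1.prems obtain A' B' where T: "T = Prod A' B'" and a: "typing G (Pi1 u) A'"
     and b: "typing G (star_tm T0) B'"
    by (auto elim: typ_PairE)
  from typing_unique[OF typing_star[OF sp_top1(2)] b] have "B' = T0" by simp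
  from a obtain B2 where "typing G u (Prod A' B2)" by (auto elim: typ_Pi1E)
  from typing_unique[OF sp_top1(1) this] have "A = A'" "T0 = B2" by simp_all
  then show ?case using sp_top1(1) T \<open>B' = T0\<close> by simp
next
  case (sp_top2 G u T0 B)
  from sp_top2.prems obtain A' B' where T: "T = Prod A' B'" and a: "typing G (star_tm T0) A'"
     and b: "typing G (Pi2 u) B'"
    by (auto elim: typ_PairE)
  from typing_unique[OF typing_star[OF sp_top2(2)] a] have "A' = T0" by simp
  from b obtain A2 where "typing G u (Prod A2 B')" by (auto elim: typ_Pi2E)
  from typing_unique[OF sp_top2(1) this] have "T0 = A2" "B = B'" by simp_all
  then show ?case using sp_top2(1) T \<open>A' = T0\<close> by simp
next
  case (c_lam A G t t')
  from c_lam.prems obtain B where "T = Fun A B" "typing (A # G) t B" by (auto elim: typ_LamE)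
  then show ?case using c_lam.IH t_lam by simp
next
  case (c_appl G u u' v)
  from c_appl.prems obtain A where "typing G u (Fun A T)" "typing G v A" by (auto elim: typ_AppE)
  then show ?case using c_appl.IH t_app by blast
next
  case (c_appr G v v' u)
  from c_appr.prems obtain A where "typing G u (Fun A T)" "typing G v A" by (auto elim: typ_AppE)
  then show ?case using c_appr.IH t_app by blast
next
  case (c_pairl G u u' v)
  from c_pairl.prems obtain A B where "T = Prod A B" "typing G u A" "typing G v B" by (auto elim: typ_PairE)
  then show ?case using c_pairl.IH t_pair by simp
next
  case (c_pairr G v v' u)
  from c_pairr.prems obtain A B where "T = Prod A B" "typing G u A" "typing G v B" by (auto elim: typ_PairE)
  then show ?case using c_pairr.IH t_pair by simp
next
  case (c_pi1 G t t')
  from c_pi1.prems obtain B where "typing G t (Prod T B)" by (auto elim: typ_Pi1E)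
  then show ?case using c_pi1.IH t_pi1 by blast
next
  case (c_pi2 G t t')
  from c_pi2.prems obtain A where "typing G t (Prod A T)" by (auto elim: typ_Pi2E)
  then show ?case using c_pi2.IH t_pi2 by blast
qed

lemma red_AppE: "red G (App u v) r \<Longrightarrow>
   (\<exists>A b. u = Lam A b \<and> r = subst 0 b v) \<or> (\<exists>T. typing G (App u v) T \<and> iso T \<and> r = star_tm T)
   \<or> (\<exists>u'. red G u u' \<and> r = App u' v) \<or> (\<exists>v'. red G v v' \<and> r = App u v')"
  by (erule red.cases) auto

lemma red_Pi1E: "red G (Pi1 t) r \<Longrightarrow>
   (\<exists>v. t = Pair r v) \<or> (\<exists>T. typing G (Pi1 t) T \<and> iso T \<and> r = star_tm T)
   \<or> (\<exists>t'. red G t t' \<and> r = Pi1 t')"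
  by (erule red.cases) auto

lemma red_Pi2E: "red G (Pi2 t) r \<Longrightarrow>
   (\<exists>v. t = Pair v r) \<or> (\<exists>T. typing G (Pi2 t) T \<and> iso T \<and> r = star_tm T)
   \<or> (\<exists>t'. red G t t' \<and> r = Pi2 t')"
  by (erule red.cases) auto

lemma red_FreeE: "red G (Free x A) r \<Longrightarrow> (\<exists>T. typing G (Free x A) T \<and> iso T \<and> r = star_tm T)"
  by (erule red.cases) auto




lemma SN_red: "SN t \<Longrightarrow> red [] t t' \<Longrightarrow> SN t'"
  unfolding SN_def
proof (rule notI, elim exE conjE)
  fix f assume n: "\<not> (\<exists>f. f 0 = t \<and> (\<forall>i. red [] (f i) (f (Suc i))))"
    and r: "red [] t t'" and f: "f 0 = t'" "\<forall>i. red [] (f i) (f (Suc i))"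
  let ?g = "\<lambda>i. case i of 0 \<Rightarrow> t | Suc j \<Rightarrow> f j"
  have st: "red [] (?g i) (?g (Suc i))" for i
    using r f by (cases i) simp_all
  have "\<exists>g. g 0 = t \<and> (\<forall>i. red [] (g i) (g (Suc i)))"
  proof (rule exI[of _ ?g], intro conjI allI)
    fix i show "red [] (?g i) (?g (Suc i))" by (rule st)
  qed simp
  with n show False by (rule notE)
qed

lemma SN_intro: "(\<And>t'. red [] t t' \<Longrightarrow> SN t') \<Longrightarrow> SN t"
  unfolding SN_def
proof (rule notI, elim exE conjE)
  fix f assume h: "\<And>t'. red [] t t' \<Longrightarrow> \<not> (\<exists>f. f 0 = t' \<and> (\<forall>i. red [] (f i) (f (Suc i))))"
    and f: "f 0 = t" "\<forall>i. red [] (f i) (f (Suc i))"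
  have r: "red [] t (f (Suc 0))" using f by (metis)
  have "\<exists>g. g 0 = f (Suc 0) \<and> (\<forall>i. red [] (g i) (g (Suc i)))"
  proof (rule exI[of _ "\<lambda>i. f (Suc i)"], intro conjI allI)
    fix i show "red [] (f (Suc i)) (f (Suc (Suc i)))" using f(2) by simp
  qed simp
  with h[OF r] show False by (rule notE)
qed

lemma SN_App: "SN (App t u) \<Longrightarrow> SN t"
  unfolding SN_def
proof (rule notI, elim exE conjE)
  fix f assume n: "\<not> (\<exists>f. f 0 = App t u \<and> (\<forall>i. red [] (f i) (f (Suc i))))"
    and f: "f 0 = t" "\<forall>i. red [] (f i) (f (Suc i))"
  have "\<exists>g. g 0 = App t u \<and> (\<forall>i. red [] (g i) (g (Suc i)))"
  proof (rule exI[of _ "\<lambda>i. App (f i) u"], intro conjI allI)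
    fix i show "red [] (App (f i) u) (App (f (Suc i)) u)" using f(2) by (simp add: c_appl)
  qed (simp add: f)
  with n show False by (rule notE)
qed

lemma SN_Pi1: "SN (Pi1 t) \<Longrightarrow> SN t"
  unfolding SN_def
proof (rule notI, elim exE conjE)
  fix f assume n: "\<not> (\<exists>f. f 0 = Pi1 t \<and> (\<forall>i. red [] (f i) (f (Suc i))))"
    and f: "f 0 = t" "\<forall>i. red [] (f i) (f (Suc i))"
  have "\<exists>g. g 0 = Pi1 t \<and> (\<forall>i. red [] (g i) (g (Suc i)))"
  proof (rule exI[of _ "\<lambda>i. Pi1 (f i)"], intro conjI allI)
    fix i show "red [] (Pi1 (f i)) (Pi1 (f (Suc i)))" using f(2) by (simp add: c_pi1)
  qed (simp add: f)
  with n show False by (rule notE)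
qed

inductive acc_red :: "tm \<Rightarrow> bool" where
  "(\<And>y. red [] x y \<Longrightarrow> acc_red y) \<Longrightarrow> acc_red x"

lemma not_accp_step: "\<not> acc_red x \<Longrightarrow> \<exists>y. red [] x y \<and> \<not> acc_red y"
proof (rule ccontr)
  assume a: "\<not> acc_red x" and b: "\<not> (\<exists>y. red [] x y \<and> \<not> acc_red y)"
  have "acc_red x"
  proof (rule acc_red.intros)
    fix y assume "red [] x y" then show "acc_red y" using b by simp
  qed
  with a show False by (rule notE)
qed

lemma SN_accp: "SN t \<Longrightarrow> acc_red t"
proof (rule ccontr)
  let ?R = "\<lambda>y x. red [] x y"
  assume sn: "SN t" and na: "\<not> acc_red t"
  define g where "g = (\<lambda>x. SOME y. red [] x y \<and> \<not> acc_red y)"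
  define f where "f = (\<lambda>i. (g ^^ i) t)"
  have g: "red [] x (g x) \<and> \<not> acc_red (g x)" if "\<not> acc_red x" for x
    unfolding g_def by (rule someI_ex[OF not_accp_step[OF that]])
  have na_f: "\<not> acc_red (f i)" for i
  proof (induction i)
    case 0 then show ?case using na by (simp add: f_def)
  next
    case (Suc i) then show ?case using g[of "f i"] by (simp add: f_def)
  qed
  have "\<exists>f. f 0 = t \<and> (\<forall>i. red [] (f i) (f (Suc i)))"
  proof (rule exI[of _ f], intro conjI allI)
    fix i show "red [] (f i) (f (Suc i))" using g[OF na_f[of i]] by (simp add: f_def)
  qed (simp add: f_def)
  with sn show False unfolding SN_def by (rule notE)
qed

lemma accp_SN: "acc_red t \<Longrightarrow> SN t"
proof (induction rule: acc_red.induct)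
  case (1 x)
  show ?case by (rule SN_intro, rule "1.IH")
qed

lemma SN_induct[consumes 1, case_names step]:
  assumes "SN t" and "\<And>t. SN t \<Longrightarrow> (\<And>t'. red [] t t' \<Longrightarrow> P t') \<Longrightarrow> P t"
  shows "P t"
  using SN_accp[OF assms(1)]
proof (induction rule: acc_red.induct)
  case (1 x)
  have "SN x" by (rule accp_SN, rule acc_red.intros, rule "1.hyps")
  then show ?case using assms(2) "1.IH" by blast
qed




definition CR0 where "CR0 \<phi> \<longleftrightarrow> (iso \<phi> \<longrightarrow> reducible \<phi> (star_tm \<phi>))"
definition CR1 where "CR1 \<phi> \<longleftrightarrow> (\<forall>t. typing [] t \<phi> \<longrightarrow> reducible \<phi> t \<longrightarrow> SN t)"
definition CR2 where "CR2 \<phi> \<longleftrightarrow> (\<forall>t t'. typing [] t \<phi> \<longrightarrow> reducible \<phi> t \<longrightarrow> red [] t t' \<longrightarrow> reducible \<phi> t')"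
definition CR3 where "CR3 \<phi> \<longleftrightarrow> (\<forall>t. typing [] t \<phi> \<longrightarrow> neutral t \<longrightarrow> (\<forall>t'. red [] t t' \<longrightarrow> reducible \<phi> t')
              \<longrightarrow> reducible \<phi> t)"

lemma star_Top_SN: "SN Star"
proof (rule SN_intro)
  fix t' assume "red [] Star t'"
  with star_normal[OF iso_top, of "[]" t'] show "SN t'" by simp
qed

lemma atomic:
  assumes "\<And>t. reducible \<phi> t = SN t" and "iso \<phi> \<Longrightarrow> \<phi> = TTop"
  shows "CR0 \<phi> \<and> CR1 \<phi> \<and> CR2 \<phi> \<and> CR3 \<phi>"
proof (intro conjI)
  show "CR0 \<phi>" unfolding CR0_def
  proof
    assume "iso \<phi>" then have "\<phi> = TTop" by (rule assms(2))
    then show "reducible \<phi> (star_tm \<phi>)" using star_Top_SN by simp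
  qed
  show "CR1 \<phi>" unfolding CR1_def assms(1) by blast
  show "CR2 \<phi>" unfolding CR2_def assms(1) using SN_red by blast
  show "CR3 \<phi>" unfolding CR3_def assms(1) using SN_intro by blast
qed

lemma prod_case:
  assumes A: "CR0 A" "CR1 A" "CR2 A" "CR3 A" and B: "CR0 B" "CR1 B" "CR2 B" "CR3 B"
  shows "CR0 (Prod A B) \<and> CR1 (Prod A B) \<and> CR2 (Prod A B) \<and> CR3 (Prod A B)"
proof (intro conjI)
  show "CR0 (Prod A B)" unfolding CR0_def
  proof
    assume "iso (Prod A B)"
    then have iA: "iso A" and iB: "iso B" by (auto elim: iso.cases)
    let ?p = "Pair (star_tm A) (star_tm B)"
    have tp: "typing [] ?p (Prod A B)" using iA iB by (intro t_pair typing_star)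
    have nf: "\<not> red [] ?p r" for r using star_normal[OF \<open>iso (Prod A B)\<close>, of "[]" r] by simp
    have "reducible A (Pi1 ?p)"
    proof -
      have "\<forall>t'. red [] (Pi1 ?p) t' \<longrightarrow> reducible A t'"
      proof (intro allI impI)
        fix t' assume "red [] (Pi1 ?p) t'"
        from red_Pi1E[OF this] show "reducible A t'"
        proof (elim disjE exE conjE)
          fix v assume "?p = Pair t' v" then show ?thesis using A(1) iA by (simp add: CR0_def)
        next
          fix T assume "typing [] (Pi1 ?p) T" "iso T" "t' = star_tm T"
          moreover have "T = A" using typing_unique[OF t_pi1[OF tp] calculation(1)] by simp
          ultimately show ?thesis using A(1) by (simp add: CR0_def)
        next
          fix t'' assume "red [] ?p t''" then show ?thesis using nf by blast
        qed
      qed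
      then show ?thesis using A(4) t_pi1[OF tp] unfolding CR3_def neutral_def by blast
    qed
    moreover have "reducible B (Pi2 ?p)"
    proof -
      have "\<forall>t'. red [] (Pi2 ?p) t' \<longrightarrow> reducible B t'"
      proof (intro allI impI)
        fix t' assume "red [] (Pi2 ?p) t'"
        from red_Pi2E[OF this] show "reducible B t'"
        proof (elim disjE exE conjE)
          fix v assume "?p = Pair v t'" then show ?thesis using B(1) iB by (simp add: CR0_def)
        next
          fix T assume "typing [] (Pi2 ?p) T" "iso T" "t' = star_tm T"
          moreover have "T = B" using typing_unique[OF t_pi2[OF tp] calculation(1)] by simp
          ultimately show ?thesis using B(1) by (simp add: CR0_def)
        next
          fix t'' assume "red [] ?p t''" then show ?thesis using nf by blast
        qed
      qed
      then show ?thesis using B(4) t_pi2[OF tp] unfolding CR3_def neutral_def by blast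
    qed
    ultimately show "reducible (Prod A B) (star_tm (Prod A B))" by simp
  qed
next
  show "CR1 (Prod A B)" unfolding CR1_def
  proof (intro allI impI)
    fix t assume t: "typing [] t (Prod A B)" "reducible (Prod A B) t"
    then have "SN (Pi1 t)" using A(2) t_pi1[OF t(1)] unfolding CR1_def by simp
    then show "SN t" by (rule SN_Pi1)
  qed
next
  show "CR2 (Prod A B)" unfolding CR2_def
  proof (intro allI impI)
    fix t t' assume t: "typing [] t (Prod A B)" "reducible (Prod A B) t" "red [] t t'"
    have "reducible A (Pi1 t')" using A(3) t_pi1[OF t(1)] t(2) c_pi1[OF t(3)] unfolding CR2_def by simp
    moreover have "reducible B (Pi2 t')" using B(3) t_pi2[OF t(1)] t(2) c_pi2[OF t(3)] unfolding CR2_def by simp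
    ultimately show "reducible (Prod A B) t'" by simp
  qed
next
  show "CR3 (Prod A B)" unfolding CR3_def
  proof (intro allI impI)
    fix t assume t: "typing [] t (Prod A B)" "neutral t" "\<forall>t'. red [] t t' \<longrightarrow> reducible (Prod A B) t'"
    have "reducible A (Pi1 t)"
    proof -
      have "\<forall>t'. red [] (Pi1 t) t' \<longrightarrow> reducible A t'"
      proof (intro allI impI)
        fix t' assume "red [] (Pi1 t) t'"
        from red_Pi1E[OF this] show "reducible A t'"
        proof (elim disjE exE conjE)
          fix v assume "t = Pair t' v" then show ?thesis using t(2) by (simp add: neutral_def)
        next
          fix T assume "typing [] (Pi1 t) T" "iso T" "t' = star_tm T"
          moreover have "T = A" using typing_unique[OF t_pi1[OF t(1)] calculation(1)] by simp
          ultimately show ?thesis using A(1) by (simp add: CR0_def)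
        next
          fix t'' assume "red [] t t''" "t' = Pi1 t''" then show ?thesis using t(3) by simp
        qed
      qed
      then show ?thesis using A(4) t_pi1[OF t(1)] unfolding CR3_def neutral_def by blast
    qed
    moreover have "reducible B (Pi2 t)"
    proof -
      have "\<forall>t'. red [] (Pi2 t) t' \<longrightarrow> reducible B t'"
      proof (intro allI impI)
        fix t' assume "red [] (Pi2 t) t'"
        from red_Pi2E[OF this] show "reducible B t'"
        proof (elim disjE exE conjE)
          fix v assume "t = Pair v t'" then show ?thesis using t(2) by (simp add: neutral_def)
        next
          fix T assume "typing [] (Pi2 t) T" "iso T" "t' = star_tm T"
          moreover have "T = B" using typing_unique[OF t_pi2[OF t(1)] calculation(1)] by simp
          ultimately show ?thesis using B(1) by (simp add: CR0_def)
        next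
          fix t'' assume "red [] t t''" "t' = Pi2 t''" then show ?thesis using t(3) by simp
        qed
      qed
      then show ?thesis using B(4) t_pi2[OF t(1)] unfolding CR3_def neutral_def by blast
    qed
    ultimately show "reducible (Prod A B) t" by simp
  qed
qed

lemma app_red:
  assumes A2: "CR2 A" and B3: "CR3 B" and B0: "CR0 B"
    and tt: "typing [] t (Fun A B)"
    and hb: "\<And>X b u. t = Lam X b \<Longrightarrow> typing [] u A \<Longrightarrow> reducible A u \<Longrightarrow> reducible B (subst 0 b u)"
    and hl: "\<And>t' u. red [] t t' \<Longrightarrow> typing [] u A \<Longrightarrow> reducible A u \<Longrightarrow> reducible B (App t' u)"
    and sn: "SN u"
  shows "typing [] u A \<Longrightarrow> reducible A u \<Longrightarrow> reducible B (App t u)"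
  using sn
proof (induction rule: SN_induct)
  case (step u)
  have ty: "typing [] (App t u) B" using tt step.prems(1) by (rule t_app)
  have "\<forall>r. red [] (App t u) r \<longrightarrow> reducible B r"
  proof (intro allI impI)
    fix r assume "red [] (App t u) r"
    from red_AppE[OF this] show "reducible B r"
    proof (elim disjE exE conjE)
      fix X b assume "t = Lam X b" "r = subst 0 b u"
      then show ?thesis using hb step.prems by simp
    next
      fix T assume h: "typing [] (App t u) T" "iso T" "r = star_tm T"
      have "B = T" using typing_unique[OF ty h(1)] .
      then show ?thesis using B0 h by (simp add: CR0_def)
    next
      fix t' assume "red [] t t'" "r = App t' u"
      then show ?thesis using hl step.prems by simp
    next
      fix u' assume h: "red [] u u'" "r = App t u'"
      have "typing [] u' A" using sr[OF h(1) step.prems(1)] .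
      moreover have "reducible A u'" using A2 step.prems h(1) unfolding CR2_def by blast
      ultimately show ?thesis using step.IH[OF h(1)] h(2) by simp
    qed
  qed
  then show ?case using B3 ty unfolding CR3_def neutral_def by blast
qed

lemma fun_case:
  assumes A: "CR0 A" "CR1 A" "CR2 A" "CR3 A" and B: "CR0 B" "CR1 B" "CR2 B" "CR3 B"
  shows "CR0 (Fun A B) \<and> CR1 (Fun A B) \<and> CR2 (Fun A B) \<and> CR3 (Fun A B)"
proof (intro conjI)
  show "CR0 (Fun A B)" unfolding CR0_def
  proof
    assume i: "iso (Fun A B)"
    then have iB: "iso B" by (auto elim: iso.cases)
    have tt: "typing [] (Lam A (star_tm B)) (Fun A B)" using iB by (intro t_lam typing_star)
    show "reducible (Fun A B) (star_tm (Fun A B))"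
    proof (simp only: star_tm.simps reducible.simps, intro allI impI)
      fix u assume u: "typing [] u A" "reducible A u"
      have sn: "SN u" using A(2) u unfolding CR1_def by blast
      show "reducible B (App (Lam A (star_tm B)) u)"
      proof (rule app_red[OF A(3) B(4) B(1) tt _ _ sn u])
        fix X b v assume "Lam A (star_tm B) = Lam X b"
        then have "b = star_tm B" by simp
        then show "reducible B (subst 0 b v)" using B(1) iB by (simp add: CR0_def)
      next
        fix t' v assume "red [] (Lam A (star_tm B)) t'"
        then show "reducible B (App t' v)" using star_normal[OF i, of "[]" t'] by simp
      qed
    qed
  qed
next
  show "CR1 (Fun A B)" unfolding CR1_def
  proof (intro allI impI)
    fix t assume t: "typing [] t (Fun A B)" "reducible (Fun A B) t"
    let ?x = "Free 0 A"
    have tx: "typing [] ?x A" by (rule t_free)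
    have "\<forall>r. red [] ?x r \<longrightarrow> reducible A r"
    proof (intro allI impI)
      fix r assume "red [] ?x r"
      from red_FreeE[OF this] obtain T where h: "typing [] ?x T" "iso T" "r = star_tm T" by blast
      have "A = T" using typing_unique[OF tx h(1)] .
      then show "reducible A r" using A(1) h by (simp add: CR0_def)
    qed
    then have "reducible A ?x" using A(4) tx unfolding CR3_def neutral_def by blast
    then have "reducible B (App t ?x)" using t tx by simp
    then have "SN (App t ?x)" using B(2) t_app[OF t(1) tx] unfolding CR1_def by blast
    then show "SN t" by (rule SN_App)
  qed
next
  show "CR2 (Fun A B)" unfolding CR2_def
  proof (intro allI impI)
    fix t t' assume t: "typing [] t (Fun A B)" "reducible (Fun A B) t" "red [] t t'"
    show "reducible (Fun A B) t'"
    proof (simp only: reducible.simps, intro allI impI)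
      fix u assume u: "typing [] u A" "reducible A u"
      have "reducible B (App t u)" using t(2) u by simp
      then show "reducible B (App t' u)" using B(3) t_app[OF t(1) u(1)] c_appl[OF t(3)]
        unfolding CR2_def by blast
    qed
  qed
next
  show "CR3 (Fun A B)" unfolding CR3_def
  proof (intro allI impI)
    fix t assume t: "typing [] t (Fun A B)" "neutral t" "\<forall>t'. red [] t t' \<longrightarrow> reducible (Fun A B) t'"
    show "reducible (Fun A B) t"
    proof (simp only: reducible.simps, intro allI impI)
      fix u assume u: "typing [] u A" "reducible A u"
      have sn: "SN u" using A(2) u unfolding CR1_def by blast
      show "reducible B (App t u)"
      proof (rule app_red[OF A(3) B(4) B(1) t(1) _ _ sn u])
        fix X b v assume "t = Lam X b"
        then show "reducible B (subst 0 b v)" using t(2) by (simp add: neutral_def)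
      next
        fix t' v assume "red [] t t'" "typing [] v A" "reducible A v"
        then show "reducible B (App t' v)" using t(3) by simp
      qed
    qed
  qed
qed

lemma all_CR: "CR0 \<phi> \<and> CR1 \<phi> \<and> CR2 \<phi> \<and> CR3 \<phi>"
proof (induction \<phi>)
  case TTop
  show ?case by (rule atomic) simp_all
next
  case (TVar x)
  show ?case by (rule atomic) (simp_all, auto elim: iso.cases)
next
  case (Prod A B)
  then show ?case using prod_case by blast
next
  case (Fun A B)
  then show ?case using fun_case by blast
qed

theorem lemma6p2p3:
  fixes \<phi> :: ty
  shows "(iso \<phi> \<longrightarrow> reducible \<phi> (star_tm \<phi>))
       \<and> (\<forall>t. typing [] t \<phi> \<longrightarrow> reducible \<phi> t \<longrightarrow> SN t)
       \<and> (\<forall>t t'. typing [] t \<phi> \<longrightarrow> reducible \<phi> t \<longrightarrow> red [] t t' \<longrightarrow> reducible \<phi> t')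
       \<and> (\<forall>t. typing [] t \<phi> \<longrightarrow> neutral t \<longrightarrow> (\<forall>t'. red [] t t' \<longrightarrow> reducible \<phi> t')
              \<longrightarrow> reducible \<phi> t)"
  using all_CR[of \<phi>] unfolding CR0_def CR1_def CR2_def CR3_def .


end
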